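(* Let $\{\Theta_{kj}\}_{k,j\in[K]}$ be i.i.d. uniform on $[-\pi,\pi)$. Let $G$ be the graph on vertex set $[K]$ in which distinct $k,j$ are adjacent if and only if $|\cos(\Theta_{kj}-\Theta_{jj})|>\frac{\pi}{\sqrt{\ln K}}$ or $|\cos(\Theta_{jk}-\Theta_{kk})|>\frac{\pi}{\sqrt{\ln K}}$. Consider the greedy coloring algorithm that colors vertices sequentially in the order $1,2,\dots,K$, giving each vertex the first color (colors being $1,2,3,\dots$) not used by any of its already colored neighbors. Then, with probability tending to $1$ as $K\to\infty$, the greedy algorithm colors $G$ with at most $\frac{K\ln\ln K}{\ln K-3\ln\ln K}+1$ colors.
   Context: The probability is over the random phases $\{\Theta_{kj}\}$. $\ln$ denotes the natural logarithm. *)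

theory Defs
  imports "HOL-Probability.Probability"
begin

definition phase_space :: "nat \<Rightarrow> (nat \<times> nat \<Rightarrow> real) measure" where
  "phase_space K = PiM ({1..K} \<times> {1..K}) (\<lambda>_. uniform_measure lborel {-pi..<pi})"

definition adjG :: "nat \<Rightarrow> (nat \<times> nat \<Rightarrow> real) \<Rightarrow> nat \<Rightarrow> nat \<Rightarrow> bool" where
  "adjG K \<Theta> k j \<longleftrightarrow> k \<noteq> j \<and>
     (\<bar>cos (\<Theta> (k, j) - \<Theta> (j, j))\<bar> > pi / sqrt (ln (real K)) \<or>
      \<bar>cos (\<Theta> (j, k) - \<Theta> (k, k))\<bar> > pi / sqrt (ln (real K)))"

text \<open>Greedy colouring in the order 1,2,...,n: vertex i gets the least colour m \<ge> 1
  not used by any already coloured neighbour j \<in> {1..i-1}. Uncoloured vertices get 0.\<close>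
fun greedy_col :: "(nat \<Rightarrow> nat \<Rightarrow> bool) \<Rightarrow> nat \<Rightarrow> nat \<Rightarrow> nat" where
  "greedy_col adj 0 = (\<lambda>_. 0)"
| "greedy_col adj (Suc n) =
     (let c = greedy_col adj n
      in c(Suc n := (LEAST m. m \<ge> 1 \<and> (\<forall>j\<in>{1..n}. adj (Suc n) j \<longrightarrow> c j \<noteq> m))))"

definition greedy_num_colors :: "(nat \<Rightarrow> nat \<Rightarrow> bool) \<Rightarrow> nat \<Rightarrow> nat" where
  "greedy_num_colors adj K = card (greedy_col adj K ` {1..K})"

end

theory Submission
  imports Defs "HOL-Real_Asymp.Real_Asymp"
begin


lemma gc_zero: "j = 0 \<or> j > n \<Longrightarrow> greedy_col adj n j = 0"
  by (induction n) (auto simp: Let_def)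

lemma gc_stable: "v \<le> n \<Longrightarrow> greedy_col adj n v = greedy_col adj v v"
proof (induction n)
  case 0 then show ?case by simp
next
  case (Suc n)
  then show ?case by (cases "v = Suc n") (auto simp: Let_def)
qed

lemma gc_local:
  "(\<And>a b. a \<in> {1..n} \<Longrightarrow> b \<in> {1..n} \<Longrightarrow> adj a b = adj' a b) \<Longrightarrow> greedy_col adj n = greedy_col adj' n"
proof (induction n)
  case 0 then show ?case by simp
next
  case (Suc n)
  have IH: "greedy_col adj n = greedy_col adj' n" using Suc by auto
  have "(\<lambda>m. m \<ge> 1 \<and> (\<forall>j\<in>{1..n}. adj (Suc n) j \<longrightarrow> greedy_col adj' n j \<noteq> m))
      = (\<lambda>m. m \<ge> 1 \<and> (\<forall>j\<in>{1..n}. adj' (Suc n) j \<longrightarrow> greedy_col adj' n j \<noteq> m))"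
    using Suc.prems by fastforce
  then show ?case by (simp add: Let_def IH)
qed

lemma gc_le:
  assumes "i \<in> {1..M}" "\<forall>j\<in>{1..n}. adj (Suc n) j \<longrightarrow> greedy_col adj n j \<noteq> i"
  shows "greedy_col adj (Suc n) (Suc n) \<le> M"
proof -
  have "(LEAST m. m \<ge> 1 \<and> (\<forall>j\<in>{1..n}. adj (Suc n) j \<longrightarrow> greedy_col adj n j \<noteq> m)) \<le> i"
    by (rule Least_le) (use assms in auto)
  then show ?thesis using assms(1) by (simp add: Let_def)
qed

lemma num_colors_le:
  assumes "\<forall>v\<in>{1..K}. \<not> (\<forall>i\<in>{1..M}. \<exists>j\<in>{1..v-1}. adj v j \<and> greedy_col adj (v-1) j = i)"
  shows "greedy_num_colors adj K \<le> M + 1"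
proof -
  have "greedy_col adj K v \<le> M" if v: "v \<in> {1..K}" for v
  proof -
    obtain n where n: "v = Suc n" using v by (cases v) auto
    from assms v have "\<not> (\<forall>i\<in>{1..M}. \<exists>j\<in>{1..v-1}. adj v j \<and> greedy_col adj (v-1) j = i)"
      by blast
    then have "\<not> (\<forall>i\<in>{1..M}. \<exists>j\<in>{1..n}. adj v j \<and> greedy_col adj n j = i)"
      using n by simp
    then obtain i where i: "i \<in> {1..M}" "\<forall>j\<in>{1..n}. \<not> (adj v j \<and> greedy_col adj n j = i)"
      by blast
    have "greedy_col adj (Suc n) (Suc n) \<le> M" by (rule gc_le[OF i(1)]) (use i n in auto)
    then show ?thesis using gc_stable[of v K adj] v n by auto
  qed
  then have "greedy_col adj K ` {1..K} \<subseteq> {0..M}" by auto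
  then have "card (greedy_col adj K ` {1..K}) \<le> card {0..M}" by (intro card_mono) auto
  then show ?thesis by (simp add: greedy_num_colors_def)
qed

lemma comp_meas[measurable]: "(\<lambda>\<omega>. \<omega> p) \<in> borel_measurable (PiM I (\<lambda>_. uniform_measure lborel {-pi..<pi}))"
proof (cases "p \<in> I")
  case True then show ?thesis by (simp add: measurable_component_singleton)
next
  case False
  have "(\<lambda>\<omega>. undefined :: real) \<in> borel_measurable (PiM I (\<lambda>_. uniform_measure lborel {-pi..<pi}))" by simp
  then show ?thesis by (rule measurable_cong[THEN iffD1, rotated]) (use False in \<open>auto simp: space_PiM PiE_def extensional_def\<close>)
qed

lemma adj_meas[measurable]: "Measurable.pred (PiM I (\<lambda>_. uniform_measure lborel {-pi..<pi})) (\<lambda>\<omega>. adjG K \<omega> a b)"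
  unfolding adjG_def by measurable

lemma gc_meas[measurable]: "(\<lambda>\<omega>. greedy_col (adjG K \<omega>) n j) \<in> measurable (PiM I (\<lambda>_. uniform_measure lborel {-pi..<pi})) (count_space UNIV)"
proof (induction n arbitrary: j)
  case 0 then show ?case by simp
next
  case (Suc n)
  note IH[measurable] = Suc
  have L: "(\<lambda>\<omega>. LEAST m. 1 \<le> m \<and> (\<forall>j'\<in>{1..n}. adjG K \<omega> (Suc n) j' \<longrightarrow> greedy_col (adjG K \<omega>) n j' \<noteq> m))
     \<in> measurable (PiM I (\<lambda>_. uniform_measure lborel {-pi..<pi})) (count_space UNIV)"
    by (rule measurable_Least) measurable
  show ?case
  proof (cases "j = Suc n")
    case True then show ?thesis using L by (simp add: Let_def)
  next
    case False then show ?thesis using IH[of j] by (simp add: Let_def)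
  qed
qed



lemma abs_cos_shift: "\<bar>cos (y + pi/2 - pi * of_int k)\<bar> = \<bar>sin y\<bar>"
  by (simp add: cos_diff cos_add)

lemma unif_T:
  assumes t: "0 < t" "t \<le> pi/2"
  shows "measure (uniform_measure lborel {-pi..<pi}) {\<theta>. \<bar>cos (\<theta> - a)\<bar> \<le> t} \<ge> t / pi"
proof -
  define k where "k = \<lfloor>(a + pi) / pi\<rfloor>"
  define c where "c = a + pi/2 - pi * of_int k"
  have k1: "of_int k \<le> (a + pi) / pi" "(a + pi) / pi < of_int k + 1" unfolding k_def by linarith+
  have "pi * of_int k \<le> a + pi" using k1(1) pi_gt_zero by (simp add: field_simps)
  moreover have "a + pi < pi * of_int k + pi" using k1(2) pi_gt_zero by (simp add: field_simps)
  ultimately have c1: "-pi/2 \<le> c" "c < pi/2" unfolding c_def by linarith+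
  have cs: "\<bar>cos (x - a)\<bar> = \<bar>sin (x - c)\<bar>" for x
  proof -
    have "x - a = (x - c) + pi/2 - pi * of_int k" unfolding c_def by simp
    then show ?thesis using abs_cos_shift by metis
  qed
  have sub: "{c - t..c + t} \<subseteq> {-pi..<pi} \<inter> {\<theta>. \<bar>cos (\<theta> - a)\<bar> \<le> t}"
  proof
    fix x assume x: "x \<in> {c - t..c + t}"
    then have "\<bar>sin (x - c)\<bar> \<le> t" using abs_sin_x_le_abs_x[of "x - c"] by auto
    then show "x \<in> {-pi..<pi} \<inter> {\<theta>. \<bar>cos (\<theta> - a)\<bar> \<le> t}" using x c1 t cs by auto
  qed
  have Tm: "{\<theta>. \<bar>cos (\<theta> - a)\<bar> \<le> t} \<in> sets lborel" by measurable
  have "2 * t \<le> measure lborel ({-pi..<pi} \<inter> {\<theta>. \<bar>cos (\<theta> - a)\<bar> \<le> t})"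
  proof -
    have f: "{-pi..<pi} \<inter> {\<theta>. \<bar>cos (\<theta> - a)\<bar> \<le> t} \<in> fmeasurable lborel"
      by (rule fmeasurableI2[of "{-pi..pi}"]) (use Tm in \<open>auto simp: fmeasurable_def\<close>)
    have "measure lborel {c - t..c + t} \<le> measure lborel ({-pi..<pi} \<inter> {\<theta>. \<bar>cos (\<theta> - a)\<bar> \<le> t})"
      by (rule measure_mono_fmeasurable[OF sub _ f]) simp
    then show ?thesis using t by simp
  qed
  moreover have "measure lborel {-pi..<pi} = 2 * pi" by simp
  moreover have "emeasure lborel {-pi..<pi} = ennreal (2*pi)" by simp
  ultimately show ?thesis using pi_gt_zero Tm
    apply (subst measure_uniform_measure)
       apply simp_all
    by (simp add: field_simps)
qed



abbreviation "U \<equiv> uniform_measure lborel {-pi..<(pi::real)}"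

lemma prob_U: "prob_space U"
  by (rule prob_space_uniform_measure) auto

lemma comp_measU[measurable]: "(\<lambda>\<omega>. \<omega> p) \<in> borel_measurable (PiM I (\<lambda>_. U))"
proof (cases "p \<in> I")
  case True then show ?thesis by (simp add: measurable_component_singleton)
next
  case False
  have "(\<lambda>\<omega>. undefined :: real) \<in> borel_measurable (PiM I (\<lambda>_. U))" by simp
  then show ?thesis by (rule measurable_cong[THEN iffD1, rotated]) (use False in \<open>auto simp: space_PiM PiE_def extensional_def\<close>)
qed

lemma indep_blocks:
  fixes B :: "'i set" and D :: "nat \<Rightarrow> 'i set"
  assumes B: "finite B" "B \<noteq> {}" and F: "finite F" "F \<noteq> {}" and D: "\<And>i. i \<in> F \<Longrightarrow> D i \<subseteq> B"
    and disj: "disjoint_family_on D F" and Q: "\<And>i. i \<in> F \<Longrightarrow> Q i \<in> sets (PiM (D i) (\<lambda>_. U))"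
  shows "measure (PiM B (\<lambda>_. U)) {y \<in> space (PiM B (\<lambda>_. U)). \<forall>i\<in>F. restrict y (D i) \<in> Q i}
          = (\<Prod>i\<in>F. measure (PiM (D i) (\<lambda>_. U)) (Q i))"
proof -
  interpret product_prob_space "\<lambda>_. U" B
    by (simp add: product_prob_space_def product_prob_space_axioms_def product_sigma_finite_def prob_U prob_space_imp_sigma_finite)
  have rv: "\<And>p. random_variable U (\<lambda>\<omega>. \<omega> p)"
  proof -
    fix p
    have "sets U = sets borel" by simp
    then show "random_variable U (\<lambda>\<omega>. \<omega> p)"
      using comp_measU[of p B] measurable_cong_sets[OF refl, of U borel "PiM B (\<lambda>_. U)"] by simp
  qed
  have ind: "indep_vars (\<lambda>_. U) (\<lambda>p \<omega>. \<omega> p) B"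
  proof (subst indep_vars_iff_distr_eq_PiM[OF B(2) rv])
    have "distr (PiM B (\<lambda>_. U)) (PiM B (\<lambda>_. U)) (\<lambda>x. restrict x B) = PiM B (\<lambda>_. U)"
      by (rule distr_PiM_restrict_finite) (use B in auto)
    also have "PiM B (\<lambda>_. U) = PiM B (\<lambda>i. distr (PiM B (\<lambda>_. U)) U (\<lambda>\<omega>. \<omega> i))"
      by (intro PiM_cong refl) (simp add: PiM_component)
    finally show "distr (PiM B (\<lambda>_. U)) (PiM B (\<lambda>_. U)) (\<lambda>x. \<lambda>i\<in>B. x i) = PiM B (\<lambda>i. distr (PiM B (\<lambda>_. U)) U (\<lambda>\<omega>. \<omega> i))"
      by (simp add: restrict_def)
  qed
  have ind2: "indep_vars (\<lambda>i. PiM (D i) (\<lambda>_. U)) (\<lambda>i \<omega>. restrict (\<lambda>p. \<omega> p) (D i)) F"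
    by (rule indep_vars_restrict[OF ind D disj])
  have eq: "{y \<in> space (PiM B (\<lambda>_. U)). \<forall>i\<in>F. restrict y (D i) \<in> Q i}
      = (\<Inter>i\<in>F. (\<lambda>\<omega>. restrict (\<lambda>p. \<omega> p) (D i)) -` Q i \<inter> space (PiM B (\<lambda>_. U)))"
    using F by auto
  have "measure (PiM B (\<lambda>_. U)) {y \<in> space (PiM B (\<lambda>_. U)). \<forall>i\<in>F. restrict y (D i) \<in> Q i}
      = (\<Prod>i\<in>F. measure (PiM B (\<lambda>_. U)) ((\<lambda>\<omega>. restrict (\<lambda>p. \<omega> p) (D i)) -` Q i \<inter> space (PiM B (\<lambda>_. U))))"
    unfolding eq by (rule indep_varsD[OF ind2 F(2) F(1) subset_refl Q])
  also have "\<dots> = (\<Prod>i\<in>F. measure (PiM (D i) (\<lambda>_. U)) (Q i))"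
  proof (rule prod.cong[OF refl])
    fix i assume i: "i \<in> F"
    have "emeasure (PiM B (\<lambda>_. U)) (prod_emb B (\<lambda>_. U) (D i) (Q i)) = emeasure (PiM (D i) (\<lambda>_. U)) (Q i)"
      by (rule emeasure_PiM_emb') (use D[OF i] B Q[OF i] finite_subset in auto)
    moreover have "prod_emb B (\<lambda>_. U) (D i) (Q i) = (\<lambda>\<omega>. restrict (\<lambda>p. \<omega> p) (D i)) -` Q i \<inter> space (PiM B (\<lambda>_. U))"
      by (simp add: prod_emb_def space_PiM)
    ultimately show "measure (PiM B (\<lambda>_. U)) ((\<lambda>\<omega>. restrict (\<lambda>p. \<omega> p) (D i)) -` Q i \<inter> space (PiM B (\<lambda>_. U)))
        = measure (PiM (D i) (\<lambda>_. U)) (Q i)"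
      by (simp add: measure_def)
  qed
  finally show ?thesis .
qed

lemma box_compl:
  assumes "finite D" and T: "\<And>p. p \<in> D \<Longrightarrow> T p \<in> sets lborel"
  shows "measure (PiM D (\<lambda>_. U)) (space (PiM D (\<lambda>_. U)) - PiE D T) = 1 - (\<Prod>p\<in>D. measure U (T p))"
proof -
  interpret finite_product_prob_space "\<lambda>_. U" D
    by (simp add: finite_product_prob_space_def product_prob_space_def product_prob_space_axioms_def
        product_sigma_finite_def prob_U prob_space_imp_sigma_finite finite_product_sigma_finite_def
        finite_product_sigma_finite_axioms_def assms(1))
  have Tm: "PiE D T \<in> sets (PiM D (\<lambda>_. U))" by (rule sets_PiM_I_finite) (use assms in auto)
  have "prob (space (PiM D (\<lambda>_. U)) - PiE D T) = 1 - prob (PiE D T)"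
    by (rule prob_compl[OF Tm])
  also have "prob (PiE D T) = (\<Prod>p\<in>D. measure U (T p))"
    by (rule prob_times) (use T in auto)
  finally show ?thesis .
qed



lemma prod_bound:
  fixes s :: "nat \<Rightarrow> nat" and q :: real
  assumes q: "0 < q" "q \<le> 1" and M: "M \<ge> 1" and S: "(\<Sum>i\<in>{1..M}. s i) \<le> K"
  shows "(\<Prod>i\<in>{1..M}. (1 - q ^ s i)) \<le> exp (- (real M * q powr (real K / real M)))"
proof -
  have "(\<Prod>i\<in>{1..M}. (1 - q ^ s i)) \<le> (\<Prod>i\<in>{1..M}. exp (- (q ^ s i)))"
  proof (rule prod_mono)
    fix i
    have "q ^ s i \<le> 1" using q by (simp add: power_le_one)
    moreover have "1 - q ^ s i \<le> exp (- (q ^ s i))" using exp_ge_add_one_self[of "- (q ^ s i)"] by simp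
    ultimately show "0 \<le> 1 - q ^ s i \<and> 1 - q ^ s i \<le> exp (- (q ^ s i))" by simp
  qed
  also have "\<dots> = exp (- (\<Sum>i\<in>{1..M}. q ^ s i))" by (simp add: exp_sum[symmetric] sum_negf)
  also have "\<dots> \<le> exp (- (real M * q powr (real K / real M)))"
  proof -
    have cardM: "card {1..M} = M" by simp
    have gm: "(\<Prod>i\<in>{1..M}. q ^ s i) powr (1 / real M) \<le> (\<Sum>i\<in>{1..M}. q ^ s i / real M)"
      using arith_geom_mean[of "{1..M}" "\<lambda>i. q ^ s i"] M q by (simp add: cardM)
    have "(\<Prod>i\<in>{1..M}. q ^ s i) = q ^ (\<Sum>i\<in>{1..M}. s i)" by (simp add: power_sum)
    also have "\<dots> \<ge> q ^ K" using S q by (intro power_decreasing) auto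
    finally have p1: "q ^ K \<le> (\<Prod>i\<in>{1..M}. q ^ s i)" .
    have "q powr (real K / real M) = (q ^ K) powr (1 / real M)"
      using q by (simp add: powr_realpow[symmetric] powr_powr)
    also have "\<dots> \<le> (\<Prod>i\<in>{1..M}. q ^ s i) powr (1 / real M)"
      using p1 q M by (intro powr_mono2) auto
    also have "\<dots> \<le> (\<Sum>i\<in>{1..M}. q ^ s i) / real M" using gm by (simp add: sum_divide_distrib)
    finally have "real M * q powr (real K / real M) \<le> (\<Sum>i\<in>{1..M}. q ^ s i)"
      using M by (simp add: field_simps)
    then show ?thesis by simp
  qed
  finally show ?thesis .
qed



interpretation PSF: product_sigma_finite "\<lambda>_::nat\<times>nat. U"
  by (simp add: product_sigma_finite_def prob_U prob_space_imp_sigma_finite)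

lemma emeas_PiM: "emeasure (PiM S (\<lambda>_. U)) X = ennreal (measure (PiM S (\<lambda>_. U)) X)"
proof -
  interpret prob_space "PiM S (\<lambda>_. U)" by (rule prob_space_PiM[OF prob_U])
  show ?thesis by (rule emeasure_eq_measure)
qed

lemma bad_bound:
  fixes K v n M :: nat and t :: real
  assumes t: "t = pi / sqrt (ln (real K))" "0 < t" "t \<le> pi/2" and v: "v \<in> {1..K}" "n = v - 1" and M: "M \<ge> 1"
  shows "measure (PiM ({1..K}\<times>{1..K}) (\<lambda>_. U))
     {\<omega> \<in> space (PiM ({1..K}\<times>{1..K}) (\<lambda>_. U)). \<forall>i\<in>{1..M}. \<exists>j\<in>{1..n}. adjG K \<omega> v j \<and> greedy_col (adjG K \<omega>) n j = i}
     \<le> exp (- (real M * (1 / ln (real K)) powr (real K / real M)))"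
proof (cases "n = 0")
  case True
  then have e: "{\<omega> \<in> space (PiM ({1..K}\<times>{1..K}) (\<lambda>_. U)). \<forall>i\<in>{1..M}. \<exists>j\<in>{1..n}. adjG K \<omega> v j \<and> greedy_col (adjG K \<omega>) n j = i} = {}"
    using M by auto
  show ?thesis by (simp only: e measure_empty) simp
next
  case False
  let ?I = "{1..K}\<times>{1..K}"
  let ?\<Omega> = "PiM ?I (\<lambda>_. U)"
  define Bad where "Bad = {\<omega> \<in> space ?\<Omega>. \<forall>i\<in>{1..M}. \<exists>j\<in>{1..n}. adjG K \<omega> v j \<and> greedy_col (adjG K \<omega>) n j = i}"
  define B where "B = (\<lambda>j. (v,j)) ` {1..n} \<union> (\<lambda>j. (j,v)) ` {1..n}"
  define A where "A = ?I - B"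
  define T where "T = (\<lambda>a::real. {\<theta>::real. \<bar>cos (\<theta> - a)\<bar> \<le> t})"
  define q where "q = 1 / ln (real K)"
  define \<beta> where "\<beta> = exp (- (real M * q powr (real K / real M)))"
  have nv: "n < v" "v \<le> K" "1 \<le> n" using v False by auto
  have BI: "B \<subseteq> ?I" using nv unfolding B_def by auto
  have IAB: "?I = A \<union> B" "A \<inter> B = {}" using BI unfolding A_def by auto
  have finAB: "finite A" "finite B" unfolding A_def B_def by auto
  have Bne: "B \<noteq> {}" using nv unfolding B_def by auto
  have lnK: "ln (real K) > 0"
  proof (rule ccontr)
    assume "\<not> ln (real K) > 0"
    then have s0: "sqrt (ln (real K)) \<le> 0" by simp
    have "t \<le> 0" unfolding t(1) by (rule divide_nonneg_nonpos) (use s0 pi_gt_zero in auto)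
    then show False using t(2) by simp
  qed
  have rq: "(t / pi) ^ 2 = q" unfolding q_def t(1) using lnK pi_gt_zero
    by (simp add: power_divide real_sqrt_pow2 field_simps)
  have r01: "0 \<le> t / pi" "t / pi \<le> 1" using t(2,3) pi_gt_zero by (auto simp: divide_le_eq)
  have q01: "0 < q" "q \<le> 1"
  proof -
    show "0 < q" unfolding q_def using lnK by simp
    show "q \<le> 1" using rq r01 by (metis power_le_one)
  qed
  have Bad_meas: "Bad \<in> sets ?\<Omega>" unfolding Bad_def by measurable
  have Tm': "T a \<in> sets borel" for a unfolding T_def by measurable
  have Tm: "T a \<in> sets lborel" for a using Tm' by simp
  have uT: "t/pi \<le> measure U (T a)" for a unfolding T_def by (rule unif_T[OF t(2,3)])
  have slice: "emeasure (PiM B (\<lambda>_. U)) ((\<lambda>y. merge A B (x, y)) -` Bad \<inter> space (PiM B (\<lambda>_. U))) \<le> ennreal \<beta>"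
    if x: "x \<in> space (PiM A (\<lambda>_. U))" for x
  proof -
    define cx where "cx = greedy_col (adjG K x) n"
    define S where "S = (\<lambda>i. {j \<in> {1..n}. cx j = i})"
    define D where "D = (\<lambda>i. (\<lambda>j. (v,j)) ` S i \<union> (\<lambda>j. (j,v)) ` S i)"
    define Tp where "Tp = (\<lambda>p::nat\<times>nat. if fst p = v then T (x (snd p, snd p)) else T (x (v, v)))"
    define Q where "Q = (\<lambda>i. space (PiM (D i) (\<lambda>_. U)) - PiE (D i) Tp)"
    have col: "greedy_col (adjG K (merge A B (x, y))) n = cx" for y
      unfolding cx_def
    proof (rule gc_local)
      fix a b assume ab: "a \<in> {1..n}" "b \<in> {1..n}"
      then have inA: "(a,b) \<in> A" "(b,a) \<in> A" "(a,a) \<in> A" "(b,b) \<in> A"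
        using nv unfolding A_def B_def by auto
      show "adjG K (merge A B (x, y)) a b = adjG K x a b"
        unfolding adjG_def using inA by (simp add: merge_def)
    qed
    have adjv: "adjG K (merge A B (x, y)) v j \<longleftrightarrow> \<not> (y (v,j) \<in> T (x (j,j)) \<and> y (j,v) \<in> T (x (v,v)))"
      if j: "j \<in> {1..n}" for y j
    proof -
      have "(v,j) \<in> B" "(j,v) \<in> B" "(v,j) \<notin> A" "(j,v) \<notin> A" "(j,j) \<in> A" "(v,v) \<in> A"
        using j nv unfolding A_def B_def by auto
      moreover have "v \<noteq> j" using j nv by auto
      ultimately show ?thesis unfolding adjG_def T_def t(1)[symmetric] by (auto simp: merge_def)
    qed
    have sl: "(\<lambda>y. merge A B (x, y)) -` Bad \<inter> space (PiM B (\<lambda>_. U))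
        = {y \<in> space (PiM B (\<lambda>_. U)). \<forall>i\<in>{1..M}. restrict y (D i) \<in> Q i}"
    proof (intro set_eqI iffI)
      fix y assume y: "y \<in> (\<lambda>y. merge A B (x, y)) -` Bad \<inter> space (PiM B (\<lambda>_. U))"
      then have ys: "y \<in> space (PiM B (\<lambda>_. U))" by auto
      have "restrict y (D i) \<in> Q i" if i: "i \<in> {1..M}" for i
      proof -
        from y have h: "\<forall>i\<in>{1..M}. \<exists>j\<in>{1..n}. adjG K (merge A B (x, y)) v j \<and> cx j = i"
          unfolding Bad_def using col by auto
        from bspec[OF h i] obtain j where j: "j \<in> {1..n}" "adjG K (merge A B (x, y)) v j" "cx j = i"
          by blast
        then have "j \<in> S i" unfolding S_def by auto
        then have inD: "(v,j) \<in> D i" "(j,v) \<in> D i" unfolding D_def by auto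
        have fne: "j \<noteq> v" using j nv by auto
        have nb: "\<not> (y (v,j) \<in> T (x (j,j)) \<and> y (j,v) \<in> T (x (v,v)))" using j(2) adjv[OF j(1)] by simp
        then have "y (v,j) \<notin> Tp (v,j) \<or> y (j,v) \<notin> Tp (j,v)" using fne unfolding Tp_def by auto
        then have "\<exists>p\<in>D i. y p \<notin> Tp p" using inD by blast
        then show ?thesis unfolding Q_def by (auto simp: space_PiM PiE_iff)
      qed
      then show "y \<in> {y \<in> space (PiM B (\<lambda>_. U)). \<forall>i\<in>{1..M}. restrict y (D i) \<in> Q i}" using ys by auto
    next
      fix y assume y: "y \<in> {y \<in> space (PiM B (\<lambda>_. U)). \<forall>i\<in>{1..M}. restrict y (D i) \<in> Q i}"
      then have ys: "y \<in> space (PiM B (\<lambda>_. U))" by auto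
      have ms: "merge A B (x, y) \<in> space ?\<Omega>"
        using x ys IAB(1) by (auto simp: space_PiM PiE_iff merge_def extensional_def)
      have "\<exists>j\<in>{1..n}. adjG K (merge A B (x, y)) v j \<and> greedy_col (adjG K (merge A B (x, y))) n j = i"
        if i: "i \<in> {1..M}" for i
      proof -
        from y i have "restrict y (D i) \<notin> PiE (D i) Tp" unfolding Q_def by auto
        then obtain p where p: "p \<in> D i" "y p \<notin> Tp p" by (auto simp: PiE_iff)
        then obtain j where j: "j \<in> S i" "p = (v,j) \<or> p = (j,v)" unfolding D_def by auto
        have j1: "j \<in> {1..n}" "cx j = i" using j unfolding S_def by auto
        have "fst (j,v) \<noteq> v" using j1 nv by auto
        then have "\<not> (y (v,j) \<in> T (x (j,j)) \<and> y (j,v) \<in> T (x (v,v)))"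
          using p j unfolding Tp_def by auto
        then have "adjG K (merge A B (x, y)) v j" using adjv[OF j1(1)] by simp
        then show ?thesis using col j1 by (intro bexI[of _ j]) auto
      qed
      then show "y \<in> (\<lambda>y. merge A B (x, y)) -` Bad \<inter> space (PiM B (\<lambda>_. U))"
        using ms ys unfolding Bad_def by auto
    qed
    have DB: "D i \<subseteq> B" for i unfolding D_def B_def S_def by auto
    have finD: "finite (D i)" for i using finite_subset[OF DB finAB(2)] .
    have disj: "disjoint_family_on D {1..M}"
      unfolding disjoint_family_on_def D_def S_def using nv by auto
    have Qm: "Q i \<in> sets (PiM (D i) (\<lambda>_. U))" for i
      unfolding Q_def by (intro sets.Diff sets.top sets_PiM_I_finite finD) (auto simp: Tp_def Tm Tm')
    have "measure (PiM B (\<lambda>_. U)) {y \<in> space (PiM B (\<lambda>_. U)). \<forall>i\<in>{1..M}. restrict y (D i) \<in> Q i}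
        = (\<Prod>i\<in>{1..M}. measure (PiM (D i) (\<lambda>_. U)) (Q i))"
      by (rule indep_blocks[OF finAB(2) Bne]) (use M DB disj Qm in auto)
    also have "\<dots> = (\<Prod>i\<in>{1..M}. 1 - (\<Prod>p\<in>D i. measure U (Tp p)))"
      unfolding Q_def by (intro prod.cong refl box_compl finD) (auto simp: Tp_def Tm Tm')
    also have "\<dots> \<le> (\<Prod>i\<in>{1..M}. 1 - q ^ card (S i))"
    proof (rule prod_mono)
      fix i
      have cD: "card (D i) \<le> 2 * card (S i)" unfolding D_def
        using card_Un_le[of "(\<lambda>j. (v,j)) ` S i" "(\<lambda>j. (j,v)) ` S i"] card_image_le[of "S i" "\<lambda>j. (v,j)"]
          card_image_le[of "S i" "\<lambda>j. (j,v)"] unfolding S_def by auto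
      have "q ^ card (S i) = (t/pi) ^ (2 * card (S i))" by (simp add: rq[symmetric] power_mult)
      also have "\<dots> \<le> (t/pi) ^ card (D i)" using r01 cD by (intro power_decreasing) auto
      also have "\<dots> = (\<Prod>p\<in>D i. t/pi)" by simp
      also have "\<dots> \<le> (\<Prod>p\<in>D i. measure U (Tp p))"
        using uT r01
        by (intro prod_mono) (auto simp: Tp_def simp del: measure_uniform_measure)
      finally have a: "q ^ card (S i) \<le> (\<Prod>p\<in>D i. measure U (Tp p))" .
      have "(\<Prod>p\<in>D i. measure U (Tp p)) \<le> 1"
        by (intro prod_le_1) (auto intro: prob_space.prob_le_1[OF prob_U])
      then show "0 \<le> 1 - (\<Prod>p\<in>D i. measure U (Tp p)) \<and> 1 - (\<Prod>p\<in>D i. measure U (Tp p)) \<le> 1 - q ^ card (S i)"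
        using a by simp
    qed
    also have "\<dots> \<le> \<beta>" unfolding \<beta>_def
    proof (rule prod_bound[OF q01 M])
      have "(\<Sum>i\<in>{1..M}. card (S i)) = card (\<Union>i\<in>{1..M}. S i)"
        by (rule card_UN_disjoint[symmetric]) (auto simp: S_def)
      also have "\<dots> \<le> card {1..n}" by (intro card_mono) (auto simp: S_def)
      finally show "(\<Sum>i\<in>{1..M}. card (S i)) \<le> K" using nv by simp
    qed
    finally have "measure (PiM B (\<lambda>_. U)) ((\<lambda>y. merge A B (x, y)) -` Bad \<inter> space (PiM B (\<lambda>_. U))) \<le> \<beta>"
      unfolding sl .
    then show ?thesis
      by (simp add: emeas_PiM ennreal_leI)
  qed
  have "emeasure ?\<Omega> Bad = emeasure (PiM (A \<union> B) (\<lambda>_. U)) Bad" using IAB by simp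
  also have "\<dots> = (\<integral>\<^sup>+x. emeasure (PiM B (\<lambda>_. U)) ((\<lambda>y. merge A B (x, y)) -` Bad \<inter> space (PiM B (\<lambda>_. U))) \<partial>PiM A (\<lambda>_. U))"
    by (rule PSF.emeasure_fold_integral) (use IAB finAB Bad_meas in auto)
  also have "\<dots> \<le> (\<integral>\<^sup>+x. ennreal \<beta> \<partial>PiM A (\<lambda>_. U))"
    by (intro nn_integral_mono) (use slice in auto)
  also have "\<dots> = ennreal \<beta>"
    by (simp add: prob_space.emeasure_space_1[OF prob_space_PiM[OF prob_U]])
  finally have "emeasure ?\<Omega> Bad \<le> ennreal \<beta>" .
  then have "measure ?\<Omega> Bad \<le> \<beta>" unfolding \<beta>_def
    by (simp add: emeas_PiM)
  then show ?thesis unfolding Bad_def \<beta>_def q_def .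
qed



lemma list_meas:
  assumes "\<And>j. (\<lambda>\<omega>. f \<omega> j) \<in> measurable M (count_space UNIV)"
  shows "(\<lambda>\<omega>. map (f \<omega>) (xs :: nat list)) \<in> measurable M (count_space (UNIV :: nat list set))"
proof (induction xs)
  case Nil then show ?case by simp
next
  case (Cons a xs)
  have g: "(\<lambda>\<omega>. i # map (f \<omega>) xs) \<in> measurable M (count_space UNIV)" for i :: nat
    by (rule measurable_compose[OF Cons, of "\<lambda>l. i # l"]) simp
  have "(\<lambda>\<omega>. (\<lambda>i \<omega>. i # map (f \<omega>) xs) (f \<omega> a) \<omega>) \<in> measurable M (count_space UNIV)"
    by (rule measurable_compose_countable[OF g assms])
  then show ?case by simp
qed

lemma gnc_meas: "(\<lambda>\<omega>. greedy_num_colors (adjG K \<omega>) K) \<in> measurable (PiM I (\<lambda>_. U)) (count_space UNIV)"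
proof -
  have eq: "greedy_num_colors (adjG K \<omega>) K = card (set (map (\<lambda>j. greedy_col (adjG K \<omega>) K j) [1..<K+1]))" for \<omega>
  proof -
    have s: "set [1..<K+1] = {1..K}" by auto
    show ?thesis by (simp only: greedy_num_colors_def set_map s)
  qed
  have "(\<lambda>\<omega>. map (\<lambda>j. greedy_col (adjG K \<omega>) K j) [1..<K+1]) \<in> measurable (PiM I (\<lambda>_. U)) (count_space UNIV)"
    by (rule list_meas) (rule gc_meas)
  then have "(\<lambda>\<omega>. (\<lambda>l. card (set l)) (map (\<lambda>j. greedy_col (adjG K \<omega>) K j) [1..<K+1])) \<in> measurable (PiM I (\<lambda>_. U)) (count_space UNIV)"
    by (rule measurable_compose) simp
  then show ?thesis unfolding eq by simp
qed

lemma step: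
  fixes K :: nat
  defines "L \<equiv> ln (real K)"
  defines "b \<equiv> real K * ln L / (L - 3 * ln L) + 1"
  defines "m0 \<equiv> real K * ln L / (L - 2 * ln L)"
  assumes c1: "4 \<le> L" and c2: "m0 \<le> b - 2" and c3: "1 \<le> m0" and c4: "0 < L - 2 * ln L"
    and c5: "2 * L \<le> L^2 * ln L / (L - 2 * ln L)" and c6: "1 < ln L"
  shows "1 - 1 / real K \<le> measure (phase_space K) {\<Theta> \<in> space (phase_space K). real (greedy_num_colors (adjG K \<Theta>) K) \<le> b}"
proof -
  let ?I = "{1..K}\<times>{1..K}"
  let ?\<Omega> = "PiM ?I (\<lambda>_. U)"
  interpret P: prob_space ?\<Omega> by (rule prob_space_PiM[OF prob_U])
  have K0: "K > 0" using c1 unfolding L_def by (cases K) auto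
  have L0: "L > 0" using c1 by simp
  define M where "M = nat \<lfloor>b\<rfloor> - 1"
  have fb: "\<lfloor>b\<rfloor> \<ge> 3" using c2 c3 by linarith
  have M1: "real M \<ge> b - 2" "real M + 1 \<le> b" using fb unfolding M_def by linarith+
  have Mm0: "m0 \<le> real M" using M1 c2 by linarith
  have M0: "M \<ge> 1" using Mm0 c3 by linarith
  define t where "t = pi / sqrt L"
  have sq: "sqrt L \<ge> 2" using real_sqrt_le_mono[OF c1] by simp
  have t0: "0 < t" unfolding t_def using sq pi_gt_zero L0 by (intro divide_pos_pos) auto
  have t1: "t \<le> pi/2" unfolding t_def using sq pi_gt_zero by (intro frac_le) auto
  define \<beta> where "\<beta> = exp (- (real M * (1 / ln (real K)) powr (real K / real M)))"
  define Bad where "Bad = (\<lambda>v. {\<omega> \<in> space ?\<Omega>. \<forall>i\<in>{1..M}. \<exists>j\<in>{1..v-1}. adjG K \<omega> v j \<and> greedy_col (adjG K \<omega>) (v-1) j = i})"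
  have Badm: "Bad v \<in> sets ?\<Omega>" for v unfolding Bad_def by measurable
  have Badb: "measure ?\<Omega> (Bad v) \<le> \<beta>" if v: "v \<in> {1..K}" for v
    unfolding Bad_def \<beta>_def by (rule bad_bound[OF _ t0[unfolded t_def L_def] t1[unfolded t_def L_def] v refl M0]) simp
  have \<beta>b: "\<beta> \<le> 1 / real K ^ 2"
  proof -
    have m0p: "0 < m0" using c3 by simp
    have "(1/L) powr (real K / m0) \<le> (1/L) powr (real K / real M)"
    proof (rule powr_mono')
      show "real K / real M \<le> real K / m0" using Mm0 m0p by (intro divide_left_mono) auto
      show "0 \<le> 1 / L" using L0 by simp
      show "1 / L \<le> 1" using c1 by simp
    qed
    moreover have "(1/L) powr (real K / m0) = L^2 / real K"
    proof -
      have "real K / m0 = (L - 2 * ln L) / ln L" unfolding m0_def using K0 c4 c6 by (simp add: field_simps)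
      have ln1: "ln (1/L) = - ln L" using L0 by (simp add: ln_div)
      have ex: "ln (1/L) * (real K / m0) = - (L - 2 * ln L)"
        unfolding ln1 \<open>real K / m0 = (L - 2 * ln L) / ln L\<close> using c6 by (simp add: field_simps)
      have "(1/L) powr (real K / m0) = exp (ln (1/L) * (real K / m0))" using L0 by (simp add: powr_def)
      then have "(1/L) powr (real K / m0) = exp (- (L - 2 * ln L))" unfolding ex .
      also have "\<dots> = exp (2 * ln L) / exp L" by (simp add: exp_diff)
      also have "\<dots> = L^2 / real K"
      proof -
        have "exp (2 * ln L) = exp (ln L + ln L)" by (simp only: mult_2)
        also have "\<dots> = L * L" using L0 by (simp only: exp_add exp_ln)
        finally have "exp (2 * ln L) = L^2" by (simp only: power2_eq_square)
        moreover have "exp L = real K" unfolding L_def using K0 by simp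
        ultimately show ?thesis by simp
      qed
      finally show ?thesis .
    qed
    ultimately have "m0 * (L^2 / real K) \<le> real M * (1/L) powr (real K / real M)"
      using Mm0 m0p by (intro mult_mono) auto
    moreover have "m0 * (L^2 / real K) = L^2 * ln L / (L - 2 * ln L)"
      unfolding m0_def using K0 by (simp add: field_simps)
    ultimately have "2 * L \<le> real M * (1/L) powr (real K / real M)" using c5 by linarith
    then have "\<beta> \<le> exp (- (2 * L))" unfolding \<beta>_def L_def by simp
    also have "\<dots> = 1 / real K ^ 2"
    proof -
      have eK: "exp L = real K" unfolding L_def using K0 by simp
      have "exp (- (2 * L)) = inverse (exp (L + L))" by (simp only: mult_2 exp_minus)
      also have "\<dots> = inverse (exp L * exp L)" by (simp only: exp_add)
      also have "\<dots> = 1 / real K ^ 2" unfolding eK by (simp add: power2_eq_square divide_inverse)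
      finally show ?thesis .
    qed
    finally show ?thesis .
  qed
  have "measure ?\<Omega> (\<Union>v\<in>{1..K}. Bad v) \<le> (\<Sum>v\<in>{1..K}. measure ?\<Omega> (Bad v))"
    by (rule measure_UNION_le) (rule finite_atLeastAtMost, rule Badm)
  also have "\<dots> \<le> (\<Sum>v\<in>{1..K}. \<beta>)" by (rule sum_mono) (use Badb in auto)
  also have "\<dots> = real K * \<beta>" by simp
  also have "\<dots> \<le> real K * (1 / real K ^ 2)" using \<beta>b by (intro mult_left_mono) auto
  also have "\<dots> = 1 / real K" using K0 by (simp add: power2_eq_square)
  finally have U1: "measure ?\<Omega> (\<Union>v\<in>{1..K}. Bad v) \<le> 1 / real K" .
  define G where "G = {\<Theta> \<in> space ?\<Omega>. real (greedy_num_colors (adjG K \<Theta>) K) \<le> b}"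
  have Gm: "G \<in> sets ?\<Omega>"
  proof -
    have "G = (\<lambda>\<Theta>. greedy_num_colors (adjG K \<Theta>) K) -` {k. real k \<le> b} \<inter> space ?\<Omega>"
      unfolding G_def by auto
    then show ?thesis using measurable_sets[OF gnc_meas, of "{k. real k \<le> b}"] by simp
  qed
  have sub: "space ?\<Omega> - (\<Union>v\<in>{1..K}. Bad v) \<subseteq> G"
  proof
    fix \<Theta> assume th: "\<Theta> \<in> space ?\<Omega> - (\<Union>v\<in>{1..K}. Bad v)"
    then have "\<forall>v\<in>{1..K}. \<not> (\<forall>i\<in>{1..M}. \<exists>j\<in>{1..v-1}. adjG K \<Theta> v j \<and> greedy_col (adjG K \<Theta>) (v-1) j = i)"
      unfolding Bad_def by auto
    then have "greedy_num_colors (adjG K \<Theta>) K \<le> M + 1" by (rule num_colors_le)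
    then have "real (greedy_num_colors (adjG K \<Theta>) K) \<le> b" using M1 by linarith
    then show "\<Theta> \<in> G" using th unfolding G_def by auto
  qed
  have "1 - 1 / real K \<le> 1 - measure ?\<Omega> (\<Union>v\<in>{1..K}. Bad v)" using U1 by simp
  also have "\<dots> = measure ?\<Omega> (space ?\<Omega> - (\<Union>v\<in>{1..K}. Bad v))"
    by (rule P.prob_compl[symmetric]) (intro sets.finite_UN finite_atLeastAtMost ballI Badm)
  also have "\<dots> \<le> measure ?\<Omega> G" by (rule P.finite_measure_mono[OF sub Gm])
  finally show ?thesis unfolding G_def phase_space_def .
qed

theorem lemma1:
  shows "(\<lambda>K. measure (phase_space K)
            {\<Theta> \<in> space (phase_space K).
               real (greedy_num_colors (adjG K \<Theta>) K)
                 \<le> real K * ln (ln (real K)) / (ln (real K) - 3 * ln (ln (real K))) + 1})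
         \<longlonglongrightarrow> 1"
proof (rule tendsto_sandwich[of "\<lambda>K. 1 - 1 / real K" _ _ "\<lambda>_. 1"])
  have e1: "eventually (\<lambda>K::nat. 4 \<le> ln (real K)) sequentially" by real_asymp
  have e2: "eventually (\<lambda>K::nat. real K * ln (ln (real K)) / (ln (real K) - 2 * ln (ln (real K))) \<le> real K * ln (ln (real K)) / (ln (real K) - 3 * ln (ln (real K))) + 1 - 2) sequentially" by real_asymp
  have e3: "eventually (\<lambda>K::nat. 1 \<le> real K * ln (ln (real K)) / (ln (real K) - 2 * ln (ln (real K)))) sequentially" by real_asymp
  have e4: "eventually (\<lambda>K::nat. 0 < ln (real K) - 2 * ln (ln (real K))) sequentially" by real_asymp
  have e5: "eventually (\<lambda>K::nat. 2 * ln (real K) \<le> ln (real K) ^ 2 * ln (ln (real K)) / (ln (real K) - 2 * ln (ln (real K)))) sequentially" by real_asymp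
  have e6: "eventually (\<lambda>K::nat. 1 < ln (ln (real K))) sequentially" by real_asymp
  show "eventually (\<lambda>K. 1 - 1 / real K \<le> measure (phase_space K)
            {\<Theta> \<in> space (phase_space K).
               real (greedy_num_colors (adjG K \<Theta>) K)
                 \<le> real K * ln (ln (real K)) / (ln (real K) - 3 * ln (ln (real K))) + 1}) sequentially"
    using e1 e2 e3 e4 e5 e6
  proof eventually_elim
    case (elim K)
    then show ?case by (intro step) auto
  qed
  show "eventually (\<lambda>K. measure (phase_space K)
            {\<Theta> \<in> space (phase_space K).
               real (greedy_num_colors (adjG K \<Theta>) K)
                 \<le> real K * ln (ln (real K)) / (ln (real K) - 3 * ln (ln (real K))) + 1} \<le> 1) sequentially"
  proof (intro always_eventually allI)
    fix K
    interpret P: prob_space "phase_space K" unfolding phase_space_def by (rule prob_space_PiM[OF prob_U])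
    show "measure (phase_space K)
            {\<Theta> \<in> space (phase_space K).
               real (greedy_num_colors (adjG K \<Theta>) K)
                 \<le> real K * ln (ln (real K)) / (ln (real K) - 3 * ln (ln (real K))) + 1} \<le> 1"
      by (rule P.prob_le_1)
  qed
  show "(\<lambda>K. 1 - 1 / real K) \<longlonglongrightarrow> 1" by real_asymp
  show "(\<lambda>_. 1::real) \<longlonglongrightarrow> 1" by simp
qed

end
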